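(* Let $0<q<1$, let $n$ be a positive integer and let $s>1$ be real. Then \[ n\,\zeta[\{s\}^n] = \sum_{k=1}^n (-1)^{k+1}\,\zeta[\{s\}^{n-k}] \sum_{j=0}^{k-1}\binom{k-1}{j}(1-q)^j\,\zeta[ks-j]. \]
   Context: Fix a real number $q$ with $0<q<1$. For real $x$ put $[x]_q := (1-q^x)/(1-q)$ (so $[n]_q=1+q+\cdots+q^{n-1}$ for integers $n\ge 0$). For an integer $m\ge1$ and real numbers $s_1,\dots,s_m$ with $s_1>1$ and $s_j\ge 1$ for $2\le j\le m$, the multiple $q$-zeta function is $\zeta[s_1,\dots,s_m] := \sum_{k_1>k_2>\cdots>k_m>0}\prod_{j=1}^m \frac{q^{(s_j-1)k_j}}{[k_j]_q^{s_j}}$, the sum being over positive integers; for the empty argument list, $\zeta[\,]:=1$. The notation $\{s\}^n$ in an argument list denotes $n$ consecutive copies of $s$ (empty if $n=0$). *)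

theory Defs
  imports "HOL-Analysis.Analysis"
begin

definition qnum :: "real \<Rightarrow> real \<Rightarrow> real" where
  "qnum q x = (1 - q powr x) / (1 - q)"

definition qz_indices :: "nat \<Rightarrow> nat list set" where
  "qz_indices m = {ks. length ks = m \<and> sorted_wrt (>) ks \<and> (\<forall>k\<in>set ks. 0 < k)}"

text \<open>Multiple q-zeta function zeta[s_1,...,s_m] (sum of nonnegative terms);
  zeta[] = 1 since the only index tuple is the empty one.\<close>
definition mqzeta :: "real \<Rightarrow> real list \<Rightarrow> real" where
  "mqzeta q ss = infsum (\<lambda>ks. \<Prod>j<length ss.
       q powr ((ss ! j - 1) * real (ks ! j)) / (qnum q (real (ks ! j))) powr (ss ! j))
     (qz_indices (length ss))"

end

theory Submission
  imports Defs
begin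

lemma infsum_exhaust:
  fixes f :: "nat list \<Rightarrow> real" and A :: "nat list set"
  assumes Asub: "A \<subseteq> {ks. length ks = m}"
    and nn: "\<And>ks. ks \<in> A \<Longrightarrow> 0 \<le> f ks"
    and bd: "\<And>N. sum f {ks\<in>A. \<forall>k\<in>set ks. k \<le> N} \<le> B"
  shows "(\<lambda>N. sum f {ks\<in>A. \<forall>k\<in>set ks. k \<le> N}) \<longlonglongrightarrow> infsum f A"
proof -
  define S where "S N = sum f {ks\<in>A. \<forall>k\<in>set ks. k \<le> N}" for N
  have fin: "finite {ks\<in>A. \<forall>k\<in>set ks. k \<le> N}" for N
    by (rule finite_subset[OF _ finite_lists_length_eq[OF finite_atMost, of N m]]) (use Asub in auto)
  have inc: "incseq S"
    unfolding incseq_def S_def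
    by (auto intro!: sum_mono2 fin nn)
  have cover: "\<exists>N. F \<subseteq> {ks\<in>A. \<forall>k\<in>set ks. k \<le> N}" if "finite F" "F \<subseteq> A" for F
  proof -
    define N where "N = Max (\<Union>(set ` F) \<union> {0})"
    have "k \<le> N" if "ks \<in> F" "k \<in> set ks" for ks k
      unfolding N_def using that \<open>finite F\<close> by (intro Max_ge) auto
    then show ?thesis using \<open>F \<subseteq> A\<close> by blast
  qed
  have Fle: "sum f F \<le> S N" if "finite F" "F \<subseteq> A" "F \<subseteq> {ks\<in>A. \<forall>k\<in>set ks. k \<le> N}" for F N
    unfolding S_def by (rule sum_mono2[OF fin that(3)]) (auto intro: nn)
  have summ: "f summable_on A"
  proof (rule nonneg_bdd_above_summable_on)
    show "0 \<le> f x" if "x \<in> A" for x using nn that .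
    show "bdd_above (sum f ` {F. F \<subseteq> A \<and> finite F})"
    proof (rule bdd_aboveI)
      fix y assume "y \<in> sum f ` {F. F \<subseteq> A \<and> finite F}"
      then obtain F where F: "F \<subseteq> A" "finite F" "y = sum f F" by auto
      then obtain N where "F \<subseteq> {ks\<in>A. \<forall>k\<in>set ks. k \<le> N}" using cover by blast
      then show "y \<le> B" using Fle[of F N] F bd[of N] unfolding S_def by auto
    qed
  qed
  obtain L where L: "S \<longlonglongrightarrow> L" "\<forall>i. S i \<le> L"
    using incseq_convergent[OF inc, of B] bd unfolding S_def by auto
  have "infsum f A \<le> L"
  proof (rule infsum_le_finite_sums[OF summ])
    fix F assume "finite F" "F \<subseteq> A"
    then obtain N where "F \<subseteq> {ks\<in>A. \<forall>k\<in>set ks. k \<le> N}" using cover by blast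
    then show "sum f F \<le> L" using order_trans[OF Fle[of F N] L(2)[rule_format]] \<open>finite F\<close> \<open>F \<subseteq> A\<close> by blast
  qed
  moreover have "L \<le> infsum f A"
    using L(1) by (rule LIMSEQ_le_const2)
      (auto simp: S_def intro!: finite_sum_le_infsum summ fin nn)
  ultimately have "L = infsum f A" by simp
  with L(1) show ?thesis unfolding S_def by simp
qed


fun EE :: "(nat \<Rightarrow> real) \<Rightarrow> nat \<Rightarrow> nat \<Rightarrow> real" where
  "EE x 0 N = 1"
| "EE x (Suc m) 0 = 0"
| "EE x (Suc m) (Suc N) = EE x (Suc m) N + x (Suc N) * EE x m N"

definition TT :: "nat \<Rightarrow> nat \<Rightarrow> nat list set" where
  "TT m N = {ks\<in>qz_indices m. \<forall>k\<in>set ks. k \<le> N}"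

lemma TT_0: "TT 0 N = {[]}"
  by (auto simp: TT_def qz_indices_def)

lemma TT_Suc_0: "TT (Suc m) 0 = {}"
  by (force simp: TT_def qz_indices_def length_Suc_conv)

lemma TT_Suc_Suc: "TT (Suc m) (Suc N) = TT (Suc m) N \<union> (Cons (Suc N)) ` TT m N"
proof (intro equalityI subsetI)
  fix ks assume "ks \<in> TT (Suc m) (Suc N)"
  then obtain k rest where ks: "ks = k # rest" and len: "length rest = m"
    and srt: "\<forall>y\<in>set rest. y < k" "sorted_wrt (>) rest" and pos: "0 < k" "\<forall>y\<in>set rest. 0 < y"
    and le: "k \<le> Suc N" "\<forall>y\<in>set rest. y \<le> Suc N"
    by (cases ks) (auto simp: TT_def qz_indices_def)
  show "ks \<in> TT (Suc m) N \<union> (Cons (Suc N)) ` TT m N"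
  proof (cases "k = Suc N")
    case True
    then have "rest \<in> TT m N" using srt pos len by (force simp: TT_def qz_indices_def)
    then show ?thesis using ks True by auto
  next
    case False
    then have kN: "k \<le> N" using le by simp
    have "\<forall>y\<in>set rest. y \<le> N" using srt kN by force
    then have "ks \<in> TT (Suc m) N" using \<open>ks \<in> TT (Suc m) (Suc N)\<close> ks kN
      by (auto simp: TT_def)
    then show ?thesis by auto
  qed
next
  fix ks assume "ks \<in> TT (Suc m) N \<union> (Cons (Suc N)) ` TT m N"
  then show "ks \<in> TT (Suc m) (Suc N)"
    by (auto simp: TT_def qz_indices_def le_SucI less_Suc_eq_le)
qed

lemma EE_TT: "EE x n N = (\<Sum>ks\<in>TT n N. prod_list (map x ks))"
proof (induction x n N rule: EE.induct)
  case (1 x N) then show ?case by (simp add: TT_0)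
next
  case (2 x m) then show ?case by (simp add: TT_Suc_0)
next
  case (3 x m N)
  have fin: "finite (TT k M)" for k M
    by (rule finite_subset[OF _ finite_lists_length_eq[OF finite_atMost, of M k]])
      (auto simp: TT_def qz_indices_def)
  have disj: "TT (Suc m) N \<inter> (Cons (Suc N)) ` TT m N = {}"
    by (auto simp: TT_def)
  have "(\<Sum>ks\<in>TT (Suc m) (Suc N). prod_list (map x ks)) =
     (\<Sum>ks\<in>TT (Suc m) N. prod_list (map x ks)) + (\<Sum>ks\<in>(Cons (Suc N)) ` TT m N. prod_list (map x ks))"
    unfolding TT_Suc_Suc by (rule sum.union_disjoint[OF fin _ disj]) (simp add: fin)
  also have "(\<Sum>ks\<in>(Cons (Suc N)) ` TT m N. prod_list (map x ks)) = x (Suc N) * (\<Sum>ks\<in>TT m N. prod_list (map x ks))"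
    by (subst sum.reindex) (auto simp: sum_distrib_left)
  finally show ?case using 3 by simp
qed

lemma EE_1: "EE x 1 N = (\<Sum>i=1..N. x i)"
  by (induction N) auto

lemma prod_nth_list: "length ks = n \<Longrightarrow> (\<Prod>j<n. x (ks ! j)) = prod_list (map x ks)"
proof (induction ks arbitrary: n)
  case Nil then show ?case by simp
next
  case (Cons a ks)
  then show ?case by (auto simp del: prod.lessThan_Suc simp add: prod.lessThan_Suc_shift)
qed


definition gq :: "real \<Rightarrow> real \<Rightarrow> nat \<Rightarrow> real" where
  "gq q a i = q powr ((a - 1) * real i) / qnum q (real i) powr a"

lemma qnum_nonneg: "0 < q \<Longrightarrow> q < 1 \<Longrightarrow> 0 \<le> qnum q (real i)"
  unfolding qnum_def by (simp add: powr_realpow power_le_one)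

lemma qnum_ge1: "0 < q \<Longrightarrow> q < 1 \<Longrightarrow> 1 \<le> i \<Longrightarrow> 1 \<le> qnum q (real i)"
proof -
  assume q: "0 < q" "q < 1" "1 \<le> i"
  have "q ^ i \<le> q ^ 1" using q by (intro power_decreasing) auto
  then show ?thesis using q unfolding qnum_def by (simp add: powr_realpow field_simps)
qed

lemma gq_nonneg: "0 < q \<Longrightarrow> q < 1 \<Longrightarrow> 0 \<le> gq q a i"
  unfolding gq_def using qnum_nonneg[of q i] by simp

lemma gq_le: assumes "0 < q" "q < 1" "1 < a" "1 \<le> i"
  shows "gq q a i \<le> (q powr (a - 1)) ^ i"
proof -
  have e: "q powr ((a - 1) * real i) = (q powr (a - 1)) ^ i"
    using assms by (simp add: powr_powr[symmetric] powr_realpow)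
  have "1 \<le> qnum q (real i) powr a"
    using qnum_ge1[OF assms(1,2,4)] assms(3) by (intro ge_one_powr_ge_zero) auto
  moreover have "0 \<le> (q powr (a - 1)) ^ i" by simp
  ultimately have "(q powr (a - 1)) ^ i \<le> (q powr (a - 1)) ^ i * qnum q (real i) powr a"
    using mult_left_mono by fastforce
  then show ?thesis unfolding gq_def e using \<open>1 \<le> qnum q (real i) powr a\<close>
    by (simp add: divide_le_eq)
qed

lemma EE_nonneg: "(\<And>i. 0 \<le> x i) \<Longrightarrow> 0 \<le> EE x n N"
  by (induction x n N rule: EE.induct) auto

lemma EE_le: "(\<And>i. 0 \<le> x i) \<Longrightarrow> EE x n N \<le> (\<Sum>i=1..N. x i) ^ n"
proof (induction x n N rule: EE.induct)
  case (1 x N) then show ?case by simp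
next
  case (2 x m) then show ?case by simp
next
  case (3 x m N)
  define S where "S = (\<Sum>i=1..N. x i)"
  have S0: "0 \<le> S" unfolding S_def using 3 by (simp add: sum_nonneg)
  have y0: "0 \<le> x (Suc N)" using 3 by simp
  have "EE x (Suc m) (Suc N) \<le> S ^ Suc m + x (Suc N) * S ^ m"
    using 3 y0 by (simp add: S_def add_mono mult_left_mono)
  also have "\<dots> \<le> (S + x (Suc N)) * (S + x (Suc N)) ^ m"
  proof -
    have "S ^ m \<le> (S + x (Suc N)) ^ m" using S0 y0 by (intro power_mono) auto
    then have "(S + x (Suc N)) * S ^ m \<le> (S + x (Suc N)) * (S + x (Suc N)) ^ m"
      using S0 y0 by (intro mult_left_mono) auto
    then show ?thesis by (simp add: algebra_simps)
  qed
  also have "\<dots> = (\<Sum>i=1..Suc N. x i) ^ Suc m" by (simp add: S_def)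
  finally show ?case .
qed

lemma gq_sum_le: assumes "0 < q" "q < 1" "1 < a"
  shows "(\<Sum>i=1..N. gq q a i) \<le> 1 / (1 - q powr (a - 1))"
proof -
  define r where "r = q powr (a - 1)"
  have r: "0 < r" "r < 1" unfolding r_def using assms powr_less_mono2[of "a-1" q 1] by auto
  have "(\<Sum>i=1..N. gq q a i) \<le> (\<Sum>i=1..N. r ^ i)"
    using gq_le[OF assms] by (intro sum_mono) (auto simp: r_def)
  also have "\<dots> \<le> (\<Sum>i<Suc N. r ^ i)"
    using r by (intro sum_mono2) auto
  also have "\<dots> = (1 - r ^ Suc N) / (1 - r)" using r by (subst sum_gp_strict) simp
  also have "\<dots> \<le> 1 / (1 - r)" using r by (intro divide_right_mono) auto
  finally show ?thesis by (simp add: r_def)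
qed

lemma zeta_lim: assumes "0 < q" "q < 1" "1 < a"
  shows "(\<lambda>N. EE (gq q a) n N) \<longlonglongrightarrow> mqzeta q (replicate n a)"
proof -
  have "mqzeta q (replicate n a) = infsum (\<lambda>ks. prod_list (map (gq q a) ks)) (qz_indices n)"
    unfolding mqzeta_def length_replicate
  proof (rule infsum_cong)
    fix ks assume "ks \<in> qz_indices n"
    then have len: "length ks = n" by (simp add: qz_indices_def)
    have "(\<Prod>j<length (replicate n a). q powr ((replicate n a ! j - 1) * real (ks ! j)) /
        qnum q (real (ks ! j)) powr (replicate n a ! j)) = (\<Prod>j<n. gq q a (ks ! j))"
      by (intro prod.cong) (auto simp: gq_def)
    also have "\<dots> = prod_list (map (gq q a) ks)" by (rule prod_nth_list[OF len])
    finally show "(\<Prod>j<n. q powr ((replicate n a ! j - 1) * real (ks ! j)) /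
        qnum q (real (ks ! j)) powr (replicate n a ! j)) = prod_list (map (gq q a) ks)" by simp
  qed
  moreover have "(\<lambda>N. sum (\<lambda>ks. prod_list (map (gq q a) ks)) {ks\<in>qz_indices n. \<forall>k\<in>set ks. k \<le> N})
     \<longlonglongrightarrow> infsum (\<lambda>ks. prod_list (map (gq q a) ks)) (qz_indices n)"
  proof (rule infsum_exhaust[where m = n and B = "(1 / (1 - q powr (a - 1))) ^ n"])
    show "qz_indices n \<subseteq> {ks. length ks = n}" by (auto simp: qz_indices_def)
    show "0 \<le> prod_list (map (gq q a) ks)" for ks
      using gq_nonneg[OF assms(1,2)] by (intro prod_list_nonneg) auto
    fix N
    have "sum (\<lambda>ks. prod_list (map (gq q a) ks)) {ks\<in>qz_indices n. \<forall>k\<in>set ks. k \<le> N} = EE (gq q a) n N"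
      by (simp add: EE_TT TT_def)
    also have "\<dots> \<le> (\<Sum>i=1..N. gq q a i) ^ n"
      using gq_nonneg[OF assms(1,2)] by (rule EE_le)
    also have "\<dots> \<le> (1 / (1 - q powr (a - 1))) ^ n"
      using gq_sum_le[OF assms] gq_nonneg[OF assms(1,2)] by (intro power_mono sum_nonneg) auto
    finally show "sum (\<lambda>ks. prod_list (map (gq q a) ks)) {ks\<in>qz_indices n. \<forall>k\<in>set ks. k \<le> N}
       \<le> (1 / (1 - q powr (a - 1))) ^ n" .
  qed
  ultimately show ?thesis by (simp add: EE_TT TT_def)
qed

lemma newton_R:
  fixes e :: "nat \<Rightarrow> real" and y :: real
  defines "e' \<equiv> (\<lambda>m. if m = 0 then e 0 else e m + y * e (m-1))"
  shows "(\<Sum>k=1..Suc n. (-1)^(k+1) * e' (Suc n - k) * y^k) = y * e n"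
proof (induction n)
  case 0 then show ?case by (simp add: e'_def)
next
  case (Suc n)
  have "(\<Sum>k=1..Suc (Suc n). (-1)^(k+1) * e' (Suc (Suc n) - k) * y^k)
      = e' (Suc n) * y + (\<Sum>k=Suc 1..Suc (Suc n). (-1)^(k+1) * e' (Suc (Suc n) - k) * y^k)"
    by (subst sum.atLeast_Suc_atMost) auto
  also have "(\<Sum>k=Suc 1..Suc (Suc n). (-1)^(k+1) * e' (Suc (Suc n) - k) * y^k)
      = (\<Sum>k=1..Suc n. (-1)^(k+2) * e' (Suc n - k) * y^(k+1))"
    by (subst sum.shift_bounds_cl_Suc_ivl) simp
  also have "\<dots> = - y * (\<Sum>k=1..Suc n. (-1)^(k+1) * e' (Suc n - k) * y^k)"
    by (simp add: sum_distrib_left algebra_simps)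
  also have "\<dots> = - y * (y * e n)" using Suc by simp
  finally show ?case by (simp add: e'_def algebra_simps)
qed

lemma newton_step:
  fixes e P :: "nat \<Rightarrow> real" and y :: real
  assumes IH: "\<And>m. 0 < m \<Longrightarrow> real m * e m = (\<Sum>k=1..m. (-1)^(k+1) * e (m-k) * P k)"
    and n: "0 < n"
  defines "e' \<equiv> (\<lambda>m. if m = 0 then e 0 else e m + y * e (m-1))"
  shows "real n * e' n = (\<Sum>k=1..n. (-1)^(k+1) * e' (n-k) * (P k + y^k))"
proof -
  obtain m where m: "n = Suc m" using n by (cases n) auto
  have R: "(\<Sum>k=1..Suc m. (-1)^(k+1) * e' (Suc m - k) * y^k) = y * e m"
    unfolding e'_def by (rule newton_R)
  have split: "e' (Suc m - k) = e (Suc m - k) + (if k \<le> m then y * e (m - k) else 0)" if "1 \<le> k" "k \<le> Suc m" for k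
    using that by (auto simp: e'_def Suc_diff_le)
  have "(\<Sum>k=1..Suc m. (-1)^(k+1) * e' (Suc m - k) * P k)
     = (\<Sum>k=1..Suc m. (-1)^(k+1) * e (Suc m - k) * P k)
       + (\<Sum>k=1..Suc m. (if k \<le> m then y * ((-1)^(k+1) * e (m - k) * P k) else 0))"
    by (subst sum.distrib[symmetric], rule sum.cong) (auto simp: split algebra_simps)
  also have "(\<Sum>k=1..Suc m. (if k \<le> m then y * ((-1)^(k+1) * e (m - k) * P k) else 0))
      = y * (\<Sum>k=1..m. (-1)^(k+1) * e (m - k) * P k)"
    by (simp add: sum_distrib_left)
  also have "(\<Sum>k=1..m. (-1)^(k+1) * e (m - k) * P k) = real m * e m"
    using IH[of m] by (cases "m = 0") auto
  also have "(\<Sum>k=1..Suc m. (-1)^(k+1) * e (Suc m - k) * P k) = real (Suc m) * e (Suc m)"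
    using IH[of "Suc m"] by simp
  finally have Q: "(\<Sum>k=1..Suc m. (-1)^(k+1) * e' (Suc m - k) * P k) = real (Suc m) * e (Suc m) + y * (real m * e m)" .
  have "(\<Sum>k=1..n. (-1)^(k+1) * e' (n-k) * (P k + y^k)) =
     (\<Sum>k=1..Suc m. (-1)^(k+1) * e' (Suc m - k) * P k) + (\<Sum>k=1..Suc m. (-1)^(k+1) * e' (Suc m - k) * y^k)"
    unfolding m by (simp add: sum.distrib[symmetric] algebra_simps)
  also have "\<dots> = real n * e' n" unfolding Q R by (simp add: m e'_def algebra_simps)
  finally show ?thesis ..
qed

lemma inner_id:
  assumes q: "0 < q" "q < 1" and i: "1 \<le> i" and k: "1 \<le> k"
  shows "(\<Sum>j=0..k-1. real ((k-1) choose j) * (1-q)^j * gq q (real k * s - real j) i) = gq q s i ^ k"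
proof -
  define Q where "Q = qnum q (real i)"
  define u where "u = q ^ i"
  have Q1: "1 \<le> Q" unfolding Q_def using qnum_ge1[OF q i] .
  then have Q0: "0 < Q" by simp
  have qi: "q powr real i = u" unfolding u_def using q by (simp add: powr_realpow)
  have QU: "(1 - q) * Q = 1 - u" unfolding Q_def qnum_def qi using q by simp
  define c where "c = q powr ((real k * s - real k) * real i) / Q powr (real k * s)"
  have trm: "gq q (real k * s - real j) i = c * (u ^ (k - 1 - j) * Q ^ j)" if "j \<le> k - 1" for j
  proof -
    have r: "real (k - 1 - j) = real k - 1 - real j" using that k by (simp add: of_nat_diff)
    have "q powr ((real k * s - real j - 1) * real i)
        = q powr ((real k * s - real k) * real i + real (k - 1 - j) * real i)"
      by (simp only: r) (simp add: algebra_simps)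
    also have "\<dots> = q powr ((real k * s - real k) * real i) * u ^ (k - 1 - j)"
      using q by (simp add: powr_add powr_powr[symmetric] qi powr_realpow mult.commute[of "real (k-1-j)"] u_def power_mult[symmetric] mult.commute[of i])
    finally have A: "q powr ((real k * s - real j - 1) * real i) = q powr ((real k * s - real k) * real i) * u ^ (k - 1 - j)" .
    have B: "Q powr (real k * s - real j) = Q powr (real k * s) / Q ^ j"
      using Q0 by (simp add: powr_diff powr_realpow)
    show ?thesis unfolding gq_def Q_def[symmetric] A B c_def using Q0 by (simp add: field_simps)
  qed
  have "(\<Sum>j=0..k-1. real ((k-1) choose j) * (1-q)^j * gq q (real k * s - real j) i)
      = c * (\<Sum>j\<le>k-1. real ((k-1) choose j) * ((1-q) * Q)^j * u ^ (k - 1 - j))"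
    unfolding atMost_atLeast0 sum_distrib_left
  proof (rule sum.cong)
    fix j assume "j \<in> {0..k-1}"
    then have "j \<le> k - 1" by simp
    show "real ((k-1) choose j) * (1-q)^j * gq q (real k * s - real j) i
       = c * (real ((k-1) choose j) * ((1-q) * Q)^j * u ^ (k - 1 - j))"
      unfolding trm[OF \<open>j \<le> k - 1\<close>] by (simp add: power_mult_distrib)
  qed simp
  also have "(\<Sum>j\<le>k-1. real ((k-1) choose j) * ((1-q) * Q)^j * u ^ (k - 1 - j)) = ((1-q) * Q + u) ^ (k-1)"
    by (rule binomial_ring[symmetric])
  also have "\<dots> = 1" unfolding QU by simp
  finally have L: "(\<Sum>j=0..k-1. real ((k-1) choose j) * (1-q)^j * gq q (real k * s - real j) i) = c" by simp
  have "gq q s i ^ k = (q powr ((s - 1) * real i)) ^ k / (Q powr s) ^ k"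
    unfolding gq_def Q_def by (simp add: power_divide)
  also have "\<dots> = q powr ((s - 1) * real i * real k) / Q powr (s * real k)"
    using q Q0 by (simp add: powr_realpow[symmetric] powr_powr)
  also have "\<dots> = c" unfolding c_def by (simp add: algebra_simps)
  finally show ?thesis using L by simp
qed


lemma newton_fin:
  "0 < n \<Longrightarrow> real n * EE x n N = (\<Sum>k=1..n. (-1)^(k+1) * EE x (n-k) N * (\<Sum>i=1..N. x i ^ k))"
proof (induction N arbitrary: n)
  case 0
  then obtain m where "n = Suc m" by (cases n) auto
  then show ?case by simp
next
  case (Suc N)
  have eq: "EE x m (Suc N) = (if m = 0 then EE x 0 N else EE x m N + x (Suc N) * EE x (m-1) N)" for m
    by (cases m) auto
  have "real n * EE x n (Suc N) = (\<Sum>k=1..n. (-1)^(k+1) * EE x (n-k) (Suc N) * ((\<Sum>i=1..N. x i ^ k) + x (Suc N) ^ k))"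
    unfolding eq
    by (rule newton_step[of "\<lambda>m. EE x m N" "\<lambda>k. \<Sum>i=1..N. x i ^ k", OF Suc.IH Suc.prems])
  then show ?case by simp
qed

theorem theorem2p1:
  fixes q s :: real and n :: nat
  assumes "0 < q" and "q < 1" and "0 < n" and "1 < s"
  shows "real n * mqzeta q (replicate n s) =
    (\<Sum>k=1..n. (-1) ^ (k + 1) * mqzeta q (replicate (n - k) s) *
       (\<Sum>j=0..k-1. real ((k - 1) choose j) * (1 - q) ^ j * mqzeta q [real k * s - real j]))"
proof -
  note q = assms(1,2)
  have a_gt: "1 < real k * s - real j" if "1 \<le> k" "j \<le> k - 1" for k j :: nat
  proof -
    have "real j \<le> real k - 1" using that by (simp add: of_nat_diff)
    moreover have "real k * 1 < real k * s" using that assms(4) by (intro mult_strict_left_mono) auto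
    ultimately show ?thesis by linarith
  qed
  have fin: "real n * EE (gq q s) n N = (\<Sum>k=1..n. (-1)^(k+1) * EE (gq q s) (n-k) N *
     (\<Sum>j=0..k-1. real ((k - 1) choose j) * (1 - q) ^ j * EE (gq q (real k * s - real j)) 1 N))" for N
  proof -
    have inner: "(\<Sum>j=0..k-1. real ((k - 1) choose j) * (1 - q) ^ j * EE (gq q (real k * s - real j)) 1 N)
        = (\<Sum>i=1..N. gq q s i ^ k)" if "k \<in> {1..n}" for k
    proof -
      have "(\<Sum>j=0..k-1. real ((k - 1) choose j) * (1 - q) ^ j * EE (gq q (real k * s - real j)) 1 N)
          = (\<Sum>i=1..N. \<Sum>j=0..k-1. real ((k - 1) choose j) * (1 - q) ^ j * gq q (real k * s - real j) i)"
        unfolding EE_1 by (simp add: sum_distrib_left) (rule sum.swap)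
      also have "\<dots> = (\<Sum>i=1..N. gq q s i ^ k)"
        using that by (intro sum.cong refl inner_id[OF q]) auto
      finally show ?thesis .
    qed
    show ?thesis unfolding newton_fin[OF assms(3)]
    proof (intro sum.cong refl)
      fix k assume k: "k \<in> {1..n}"
      show "(-1)^(k+1) * EE (gq q s) (n-k) N * (\<Sum>i=1..N. gq q s i ^ k) =
        (-1)^(k+1) * EE (gq q s) (n-k) N *
        (\<Sum>j=0..k-1. real ((k - 1) choose j) * (1 - q) ^ j * EE (gq q (real k * s - real j)) 1 N)"
        by (simp only: inner[OF k])
    qed
  qed
  have limL: "(\<lambda>N. real n * EE (gq q s) n N) \<longlonglongrightarrow> real n * mqzeta q (replicate n s)"
    by (intro tendsto_mult_left zeta_lim q assms(4))
  have lim1: "(\<lambda>N. EE (gq q (real k * s - real j)) 1 N) \<longlonglongrightarrow> mqzeta q [real k * s - real j]"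
    if "1 \<le> k" "j \<le> k - 1" for k j :: nat
    using zeta_lim[OF q a_gt[OF that], of 1] by simp
  have limR: "(\<lambda>N. (\<Sum>k=1..n. (-1)^(k+1) * EE (gq q s) (n-k) N *
     (\<Sum>j=0..k-1. real ((k - 1) choose j) * (1 - q) ^ j * EE (gq q (real k * s - real j)) 1 N)))
     \<longlonglongrightarrow> (\<Sum>k=1..n. (-1) ^ (k + 1) * mqzeta q (replicate (n - k) s) *
       (\<Sum>j=0..k-1. real ((k - 1) choose j) * (1 - q) ^ j * mqzeta q [real k * s - real j]))"
    by (intro tendsto_sum tendsto_mult tendsto_const zeta_lim q assms(4) lim1) auto
  show ?thesis using LIMSEQ_unique[OF limL] limR unfolding fin by blast
qed

end
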